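(* Let $k\ge 3$ and $s\geq 2k$ be integers, and let $\eta>0$. Then there exists a number $c=c(k,s,\eta)>0$ such that for every $A\ge 1$, the number of $\mathbf{a}\in(\mathbb{Z}\setminus\{0\})^s$ with $|\mathbf{a}|\leq A$ for which the equation $a_1x_1^k+\dots+a_sx_s^k=0$ admits an integral solution $\mathbf{x}\in\mathbb{Z}^s$ in the range $0<|\mathbf{x}|\leq c|\mathbf{a}|^{1/(s-k)}$ does not exceed $\eta A^s$.
   Context: $|\mathbf{x}|=\max_j|x_j|$, and similarly for $\mathbf{a}$. *)

theory Defs
  imports Complex_Main
begin

definition supnorm :: "int list \<Rightarrow> int" where
  "supnorm v = Max (insert 0 (abs ` set v))"

definition diag_form :: "nat \<Rightarrow> int list \<Rightarrow> int list \<Rightarrow> int" where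
  "diag_form k a x = (\<Sum>i<length a. a ! i * (x ! i) ^ k)"

end

theory Submission
  imports Defs "HOL-Computational_Algebra.Primes"
begin


definition dot :: "int list \<Rightarrow> int list \<Rightarrow> int" where
  "dot a y = sum_list (map2 (*) a y)"

lemma dot_Nil1 [simp]: "dot [] y = 0" by (simp add: dot_def)
lemma dot_Nil2 [simp]: "dot a [] = 0" by (simp add: dot_def)
lemma dot_Cons [simp]: "dot (h#t) (y#ys) = h*y + dot t ys" by (simp add: dot_def)

lemma dot_append: "length a = length y \<Longrightarrow> dot (a @ b) (y @ z) = dot a y + dot b z"
  by (simp add: dot_def)

lemma dvd_dot: "(\<forall>y\<in>set ys. g dvd y) \<Longrightarrow> g dvd dot a ys"
proof (induction ys arbitrary: a)
  case Nil then show ?case by simp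
next
  case (Cons y ys) then show ?case by (cases a) auto
qed

definition SS :: "int \<Rightarrow> int list \<Rightarrow> int \<Rightarrow> int \<Rightarrow> int list set" where
  "SS A ys M r = {a. length a = length ys \<and> set a \<subseteq> {-A..A} \<and> M dvd (dot a ys - r)}"

lemma SS_finite: "finite (SS A ys M r)"
  by (rule finite_subset[of _ "{a. set a \<subseteq> {-A..A} \<and> length a = length ys}"])
     (auto simp: SS_def finite_lists_length_eq)

lemma SS_Nil: "SS A [] M r \<subseteq> {[]}" by (auto simp: SS_def)


lemma SS_Cons: "SS A (y#ys) M r = (\<Union>h\<in>{-A..A}. (#) h ` SS A ys M (r - h*y))"
proof (intro equalityI subsetI)
  fix a assume a: "a \<in> SS A (y#ys) M r"
  then obtain h t where at: "a = h#t" by (cases a) (auto simp: SS_def)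
  have e: "dot t ys - (r - h*y) = dot a (y#ys) - r" by (simp add: at)
  from a at have "h \<in> {-A..A}" "t \<in> SS A ys M (r - h*y)" by (auto simp: SS_def e)
  then show "a \<in> (\<Union>h\<in>{-A..A}. (#) h ` SS A ys M (r - h*y))" using at by blast
next
  fix a assume "a \<in> (\<Union>h\<in>{-A..A}. (#) h ` SS A ys M (r - h*y))"
  then obtain h t where h: "h \<in> {-A..A}" and t: "t \<in> SS A ys M (r - h*y)" and at: "a = h#t" by blast
  have e: "dot t ys - (r - h*y) = dot a (y#ys) - r" by (simp add: at)
  from t have "M dvd dot t ys - (r - h*y)" by (simp add: SS_def)
  then have "M dvd dot a (y#ys) - r" by (simp only: e)
  with h t show "a \<in> SS A (y#ys) M r" by (auto simp: SS_def at)
qed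

lemma SS_empty:
  assumes "\<not> gcd M (Gcd (set ys)) dvd r" shows "SS A ys M r = {}"
proof (rule ccontr)
  assume "SS A ys M r \<noteq> {}"
  then obtain a where a: "a \<in> SS A ys M r" by blast
  let ?G = "gcd M (Gcd (set ys))"
  have "?G dvd dot a ys" by (rule dvd_dot) (auto intro: dvd_trans[OF gcd_dvd2 Gcd_dvd])
  moreover have "?G dvd dot a ys - r" using a by (auto simp: SS_def intro: dvd_trans[OF gcd_dvd1])
  ultimately have "?G dvd dot a ys - (dot a ys - r)" by (rule dvd_diff)
  then have "?G dvd r" by simp
  with assms show False by simp
qed

lemma card_res_class:
  fixes A q h0 :: int assumes "A \<ge> 0" "q > 0"
  shows "card {h\<in>{-A..A}. h mod q = h0 mod q} \<le> nat ((2*A) div q + 1)"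
proof -
  let ?S = "{h\<in>{-A..A}. h mod q = h0 mod q}"
  let ?f = "\<lambda>h. (h + A) div q"
  have inj: "inj_on ?f ?S"
  proof (rule inj_onI)
    fix u v assume u: "u \<in> ?S" and v: "v \<in> ?S" and e: "?f u = ?f v"
    have "(u + A) mod q = (v + A) mod q" using u v by (metis (mono_tags, lifting) mem_Collect_eq mod_add_left_eq)
    then have "u + A = v + A" using e by (metis div_mult_mod_eq)
    then show "u = v" by simp
  qed
  have "?f ` ?S \<subseteq> {0..(2*A) div q}"
  proof
    fix z assume "z \<in> ?f ` ?S"
    then obtain h where h: "h \<in> {-A..A}" and z: "z = (h + A) div q" by auto
    have "0 \<le> z" using h assms z by (simp add: pos_imp_zdiv_nonneg_iff)
    moreover have "z \<le> (2*A) div q" using h assms z by (simp add: zdiv_mono1)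
    ultimately show "z \<in> {0..(2*A) div q}" by simp
  qed
  then have "card (?f ` ?S) \<le> card {0..(2*A) div q}"
    by (intro card_mono) auto
  with card_image[OF inj] show ?thesis by simp
qed


lemma lin3: fixes Z a b c X :: real
  assumes "a \<le> X" "b \<le> X" "c \<le> X" shows "Z + a + b + c \<le> Z + 3*X"
  using assms by linarith

lemma arith1:
  fixes B u v P t :: real
  assumes "B \<ge> 1" "0 < u" "u \<le> 1" "0 < v" "v \<le> 1" "P \<ge> 0" "t \<ge> 1"
  shows "(B*u + 1) * (P*v + t*P/B) \<le> B*P*(u*v) + 3*t*(B*P)/B"
proof -
  have B0: "B > 0" using assms by simp
  have e1: "(B*u + 1) * (P*v + t*P/B) = B*P*(u*v) + u*(t*P) + P*v + t*P/B"
    using B0 by (simp add: field_simps)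
  have "u*(t*P) \<le> t*P" using assms by (simp add: mult_left_le_one_le)
  moreover have "P*v \<le> t*P" using assms
    by (metis mult.commute mult_left_mono mult_right_mono mult_1_left order_trans less_imp_le)
  moreover have "t*P/B \<le> t*P"
  proof -
    have tp: "0 \<le> t*P" using assms by simp
    have "t*P/B \<le> t*P/1" using tp assms by (intro divide_left_mono) auto
    then show ?thesis by simp
  qed
  ultimately have "(B*u + 1) * (P*v + t*P/B) \<le> B*P*(u*v) + 3*(t*P)" unfolding e1 by (rule lin3)
  also have "\<dots> = B*P*(u*v) + 3*t*(B*P)/B" using B0 by simp
  finally show ?thesis .
qed

lemma card_T:
  fixes A G y r :: int
  assumes A: "A \<ge> 0" and G: "G > 0"
  shows "real (card {h\<in>{-A..A}. G dvd r - h*y}) \<le> (2*A+1) * gcd G y / G + 1"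
proof (cases "{h\<in>{-A..A}. G dvd r - h*y} = {}")
  case True
  have "0 \<le> real_of_int ((2*A+1) * gcd G y) / G" using A G by simp
  then show ?thesis unfolding True by simp
next
  case False
  then obtain h0 where h0: "h0 \<in> {h\<in>{-A..A}. G dvd r - h*y}" by blast
  define g where "g = gcd G y"
  define q where "q = G div g"
  have g0: "g > 0" using G by (simp add: g_def)
  have Gq: "G = g * q" by (simp add: g_def q_def)
  have q0: "q > 0" using G g0 Gq by (simp add: zero_less_mult_iff)
  obtain y' where yy: "y = g * y'" by (metis g_def gcd_dvd2 dvdE)
  have cop: "coprime q y'"
  proof -
    have "coprime (G div gcd G y) (y div gcd G y)" using G by (intro div_gcd_coprime) simp
    moreover have "y div g = y'" using yy g0 by simp
    ultimately show ?thesis by (simp add: q_def g_def)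
  qed
  have sub: "{h\<in>{-A..A}. G dvd r - h*y} \<subseteq> {h\<in>{-A..A}. h mod q = h0 mod q}"
  proof
    fix h assume h: "h \<in> {h\<in>{-A..A}. G dvd r - h*y}"
    have d1: "G dvd r - h*y" using h by simp
    have d2: "G dvd r - h0*y" using h0 by simp
    have "G dvd (r - h*y) - (r - h0*y)" by (rule dvd_diff[OF d1 d2])
    then have "g * q dvd g * ((h0 - h) * y')" by (simp add: Gq yy algebra_simps)
    then have "q dvd (h0 - h) * y'" using g0 by simp
    then have "q dvd h0 - h" using cop by (simp add: coprime_dvd_mult_left_iff)
    then have "h mod q = h0 mod q" by (simp add: mod_eq_dvd_iff dvd_diff_commute)
    with h show "h \<in> {h\<in>{-A..A}. h mod q = h0 mod q}" by simp
  qed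
  have "card {h\<in>{-A..A}. G dvd r - h*y} \<le> card {h\<in>{-A..A}. h mod q = h0 mod q}"
    by (rule card_mono[OF finite_subset[of _ "{-A..A}"] sub]) auto
  also have "\<dots> \<le> nat ((2*A) div q + 1)" by (rule card_res_class[OF A q0])
  finally have c0: "card {h\<in>{-A..A}. G dvd r - h*y} \<le> nat ((2*A) div q + 1)" .
  have nn: "0 \<le> (2*A) div q + 1" using A q0 by (simp add: pos_imp_zdiv_nonneg_iff)
  have "real (card {h\<in>{-A..A}. G dvd r - h*y}) \<le> real (nat ((2*A) div q + 1))"
    using c0 by (rule of_nat_mono)
  also have "\<dots> = real_of_int ((2*A) div q + 1)" using nn by simp
  finally have c: "real (card {h\<in>{-A..A}. G dvd r - h*y}) \<le> real_of_int ((2*A) div q + 1)" .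
  have i: "(2*A) div q * q \<le> 2*A"
  proof -
    have "2*A = (2*A) div q * q + (2*A) mod q" by simp
    moreover have "0 \<le> (2*A) mod q" using q0 by simp
    ultimately show ?thesis by linarith
  qed
  have "real_of_int ((2*A) div q) * real_of_int q \<le> real_of_int (2*A)"
    using i by (metis of_int_le_iff of_int_mult)
  then have "real_of_int ((2*A) div q) \<le> real_of_int (2*A) / real_of_int q"
    using q0 by (simp add: le_divide_eq)
  also have "\<dots> \<le> real_of_int (2*A+1) / real_of_int q" using q0 by (simp add: divide_right_mono)
  also have "real_of_int (2*A+1) / real_of_int q = (2*A+1) * gcd G y / G"
  proof -
    have e1: "real_of_int (gcd G y) = real_of_int g" by (simp add: g_def)
    have e2: "real_of_int G = real_of_int g * real_of_int q" using Gq by simp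
    show ?thesis unfolding e2 using g0 q0 by (simp add: e1 field_simps)
  qed
  finally show ?thesis using c by simp
qed


lemma SS_bound:
  fixes A M r :: int
  assumes A: "A \<ge> 0" and M: "M > 0"
  shows "real (card (SS A ys M r)) \<le>
    real_of_int (2*A+1) ^ length ys * real_of_int (gcd M (Gcd (set ys))) / real_of_int M
    + 3 ^ length ys * real_of_int (2*A+1) ^ length ys / real_of_int (2*A+1)"
proof (induction ys arbitrary: r)
  case Nil
  have "card (SS A [] M r) \<le> card {[]::int list}" by (rule card_mono[OF _ SS_Nil]) simp
  then have "real (card (SS A [] M r)) \<le> 1" by simp
  moreover have e: "real_of_int (2*A+1) ^ length [] * real_of_int (gcd M (Gcd (set []))) / real_of_int M
    + 3 ^ length [] * real_of_int (2*A+1) ^ length [] / real_of_int (2*A+1) = 1 + 1 / real_of_int (2*A+1)"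
    using M by simp
  moreover have "0 \<le> 1 / real_of_int (2*A+1)" using A by simp
  ultimately have "real (card (SS A [] M r)) \<le> 1 + 1 / real_of_int (2*A+1)" by linarith
  then show ?case by (simp only: e)
next
  case (Cons y ys)
  define B where "B = real_of_int (2*A+1)"
  define n where "n = length ys"
  define G where "G = gcd M (Gcd (set ys))"
  define g where "g = gcd M (Gcd (set (y#ys)))"
  define Bn where "Bn = B ^ n * real_of_int G / real_of_int M + 3 ^ n * B ^ n / B"
  define T where "T = {h\<in>{-A..A}. G dvd r - h*y}"
  have B1: "B \<ge> 1" using A by (simp add: B_def)
  have G0: "G > 0" using M by (simp add: G_def)
  have g0: "g > 0" using M by (simp add: g_def)
  have gG: "g = gcd G y" by (simp add: g_def G_def ac_simps)
  have gleG: "g \<le> G" using G0 by (simp add: gG zdvd_imp_le)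
  have GleM: "G \<le> M" using M by (simp add: G_def zdvd_imp_le)
  have IH: "\<And>r. real (card (SS A ys M r)) \<le> Bn"
    using Cons.IH by (simp add: Bn_def B_def n_def G_def)
  have Bn0: "Bn \<ge> 0" using B1 G0 M by (simp add: Bn_def)
  have "card (SS A (y#ys) M r) = (\<Sum>h\<in>{-A..A}. card ((#) h ` SS A ys M (r - h*y)))"
    unfolding SS_Cons by (rule card_UN_disjoint) (auto simp: SS_finite)
  also have "\<dots> = (\<Sum>h\<in>{-A..A}. card (SS A ys M (r - h*y)))"
    by (intro sum.cong refl card_image) (simp add: inj_on_def)
  finally have "real (card (SS A (y#ys) M r)) = (\<Sum>h\<in>{-A..A}. real (card (SS A ys M (r - h*y))))"
    by simp
  also have "\<dots> \<le> (\<Sum>h\<in>{-A..A}. (if h \<in> T then Bn else 0))"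
  proof (rule sum_mono)
    fix h assume h: "h \<in> {-A..A}"
    show "real (card (SS A ys M (r - h*y))) \<le> (if h \<in> T then Bn else 0)"
    proof (cases "h \<in> T")
      case True then show ?thesis using IH by simp
    next
      case False
      then have "\<not> G dvd r - h*y" using h by (simp add: T_def)
      then have "SS A ys M (r - h*y) = {}" by (intro SS_empty) (simp add: G_def)
      then show ?thesis using False by simp
    qed
  qed
  also have "\<dots> = (\<Sum>h\<in>{-A..A} \<inter> T. Bn)" by (rule sum.inter_restrict[symmetric]) simp
  also have "(\<Sum>h\<in>{-A..A} \<inter> T. Bn) = (\<Sum>h\<in>T. Bn)"
    by (rule arg_cong[where f="\<lambda>X. sum (\<lambda>_. Bn) X"]) (auto simp: T_def)
  also have "\<dots> = real (card T) * Bn" by simp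
  also have "\<dots> \<le> (B * (real_of_int g / real_of_int G) + 1) * Bn"
  proof (rule mult_right_mono[OF _ Bn0])
    have "real (card T) \<le> real_of_int ((2*A+1) * gcd G y) / real_of_int G + 1"
      unfolding T_def by (rule card_T[OF A G0])
    then show "real (card T) \<le> B * (real_of_int g / real_of_int G) + 1"
      by (simp add: B_def gG)
  qed
  also have "\<dots> = (B * (real_of_int g / real_of_int G) + 1) *
       (B^n * (real_of_int G / real_of_int M) + 3^n * B^n / B)" by (simp add: Bn_def)
  also have "\<dots> \<le> B * B^n * ((real_of_int g / real_of_int G) * (real_of_int G / real_of_int M)) + 3 * 3^n * (B * B^n) / B"
    by (rule arith1) (use B1 g0 G0 M gleG GleM in auto)
  also have "\<dots> = B ^ length (y#ys) * real_of_int g / real_of_int M + 3 ^ length (y#ys) * B ^ length (y#ys) / B"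
    using G0 by (simp add: n_def)
  finally show ?case by (simp add: B_def g_def)
qed


lemma Gcd_pow_1:
  fixes x :: "int list"
  assumes G: "Gcd (set x) = 1"
  shows "Gcd (set (map (\<lambda>t. t^k) x)) = 1"
proof (rule ccontr)
  let ?g = "Gcd (set (map (\<lambda>t. t^k) x))"
  assume ne: "?g \<noteq> 1"
  have "?g \<noteq> 0"
  proof
    assume "?g = 0"
    then have "\<forall>t\<in>set x. t^k = 0" by auto
    then have "set x \<subseteq> {0}" by auto
    then have "Gcd (set x) = 0" by simp
    with G show False by simp
  qed
  moreover have "\<not> is_unit ?g" using ne Gcd_int_greater_eq_0[of "set (map (\<lambda>t. t^k) x)"]
    by (auto simp: zdvd1_eq)
  ultimately obtain p where p: "p dvd ?g" "prime p" using prime_divisor_exists by blast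
  have "\<forall>t\<in>set x. p dvd t"
  proof
    fix t assume "t \<in> set x"
    then have "t^k \<in> set (map (\<lambda>t. t^k) x)" by simp
    then have "Gcd (set (map (\<lambda>t. t^k) x)) dvd t^k" by (rule Gcd_dvd)
    then have "p dvd t^k" using p(1) by (rule dvd_trans[rotated])
    then show "p dvd t" using p(2) prime_dvd_power by blast
  qed
  then have "p dvd Gcd (set x)" by (intro Gcd_greatest) auto
  with G p(2) show False by (simp add: not_prime_unit)
qed

definition rem :: "nat \<Rightarrow> 'a list \<Rightarrow> 'a list" where
  "rem j l = take j l @ drop (Suc j) l"

lemma dot_split:
  assumes "j < length a" "length a = length y"
  shows "dot a y = dot (rem j a) (rem j y) + a!j * y!j"
proof -
  have "dot a y = dot (take j a @ a!j # drop (Suc j) a) (take j y @ y!j # drop (Suc j) y)"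
    using assms by (metis id_take_nth_drop)
  also have "\<dots> = dot (take j a) (take j y) + (a!j * y!j + dot (drop (Suc j) a) (drop (Suc j) y))"
    using assms by (simp add: dot_append)
  also have "dot (rem j a) (rem j y) = dot (take j a) (take j y) + dot (drop (Suc j) a) (drop (Suc j) y)"
    using assms by (simp add: rem_def dot_append)
  ultimately show ?thesis by simp
qed

lemma supnorm_attained:
  fixes x :: "int list"
  assumes "x \<noteq> []"
  shows "\<exists>j<length x. \<bar>x!j\<bar> = supnorm x"
proof -
  have fin: "finite (insert 0 (abs ` set x))" by simp
  have "supnorm x \<in> insert 0 (abs ` set x)" unfolding supnorm_def by (rule Max_in[OF fin]) simp
  moreover have "\<bar>x!0\<bar> \<le> supnorm x" using assms unfolding supnorm_def
    by (intro Max_ge[OF fin]) simp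
  ultimately show ?thesis using assms
    by (auto simp: in_set_conv_nth intro: exI[of _ 0])
qed

lemma supnorm_ge: "t \<in> set x \<Longrightarrow> \<bar>t\<bar> \<le> supnorm x"
  unfolding supnorm_def by (intro Max_ge) auto

lemma supnorm_le_iff: "m \<ge> 0 \<Longrightarrow> supnorm x \<le> m \<longleftrightarrow> (\<forall>t\<in>set x. \<bar>t\<bar> \<le> m)"
  unfolding supnorm_def by (subst Max_le_iff) auto

lemma supnorm_nonneg: "supnorm x \<ge> 0"
  unfolding supnorm_def by (intro Max_ge) auto


lemma E_bound:
  fixes A :: int and x :: "int list" and k :: nat
  assumes A: "A \<ge> 0" and G: "Gcd (set x) = 1"
  shows "real (card {a. length a = length x \<and> set a \<subseteq> {-A..A} \<and> dot a (map (\<lambda>t. t^k) x) = 0})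
    \<le> real_of_int (2*A+1) ^ (length x - 1) / real_of_int (supnorm x) ^ k
       + 3 ^ (length x - 1) * real_of_int (2*A+1) ^ (length x - 1) / real_of_int (2*A+1)"
proof -
  define y where "y = map (\<lambda>t. t^k) x"
  define E where "E = {a. length a = length x \<and> set a \<subseteq> {-A..A} \<and> dot a y = 0}"
  have xne: "x \<noteq> []" using G by auto
  then obtain j where j: "j < length x" and xj: "\<bar>x!j\<bar> = supnorm x" using supnorm_attained by blast
  have xj0: "x!j \<noteq> 0"
  proof
    assume "x!j = 0"
    then have "supnorm x = 0" using xj by simp
    then have "\<forall>t\<in>set x. \<bar>t\<bar> \<le> 0" using supnorm_ge by fastforce
    then have "set x \<subseteq> {0}" by auto
    then have "Gcd (set x) = 0" by simp
    then show False using G by simp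
  qed
  have ly: "length y = length x" by (simp add: y_def)
  have yj: "y!j = (x!j)^k" using j by (simp add: y_def)
  have yj0: "y!j \<noteq> 0" using xj0 yj by simp
  define Y where "Y = \<bar>y!j\<bar>"
  have Y0: "Y > 0" using yj0 by (simp add: Y_def)
  have inj: "inj_on (rem j) E"
  proof (rule inj_onI)
    fix a b assume a: "a \<in> E" and b: "b \<in> E" and e: "rem j a = rem j b"
    have la: "j < length a" "length a = length y" using a j ly by (auto simp: E_def)
    have lb: "j < length b" "length b = length y" using b j ly by (auto simp: E_def)
    have "0 = dot (rem j a) (rem j y) + a!j * y!j" using dot_split[OF la] a by (simp add: E_def)
    then have "0 = dot (rem j b) (rem j y) + a!j * y!j" by (simp only: e)
    moreover have "0 = dot (rem j b) (rem j y) + b!j * y!j" using dot_split[OF lb] b by (simp add: E_def)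
    ultimately have "a!j * y!j = b!j * y!j" using e by linarith
    then have ej: "a!j = b!j" using yj0 by simp
    have "take j a @ drop (Suc j) a = take j b @ drop (Suc j) b" using e by (simp add: rem_def)
    moreover have "length (take j a) = length (take j b)" using la lb by simp
    ultimately have "take j a = take j b" "drop (Suc j) a = drop (Suc j) b" by auto
    then show "a = b" using ej la(1) lb(1) id_take_nth_drop by metis
  qed
  have sub: "rem j ` E \<subseteq> SS A (rem j y) Y 0"
  proof
    fix z assume "z \<in> rem j ` E"
    then obtain a where a: "a \<in> E" and z: "z = rem j a" by auto
    have la: "j < length a" "length a = length y" using a j ly by (auto simp: E_def)
    have "length z = length (rem j y)" using la z by (simp add: rem_def)
    moreover have "set z \<subseteq> {-A..A}"
    proof -
      have "set z \<subseteq> set a" unfolding z rem_def using set_take_subset set_drop_subset by fastforce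
      then show ?thesis using a by (auto simp: E_def)
    qed
    moreover have "Y dvd dot z (rem j y) - 0"
    proof -
      have "dot z (rem j y) = - (a!j * y!j)" using dot_split[OF la] a z by (simp add: E_def)
      then show ?thesis by (simp add: Y_def)
    qed
    ultimately show "z \<in> SS A (rem j y) Y 0" by (simp add: SS_def)
  qed
  have "card E = card (rem j ` E)" using inj by (simp add: card_image)
  also have "\<dots> \<le> card (SS A (rem j y) Y 0)" by (rule card_mono[OF SS_finite sub])
  finally have c1: "real (card E) \<le> real (card (SS A (rem j y) Y 0))" by simp
  have lr: "length (rem j y) = length x - 1" using j ly by (simp add: rem_def)
  have sety: "set y = insert (y!j) (set (rem j y))"
  proof -
    have "set y = set (take j y @ y!j # drop (Suc j) y)" using j ly id_take_nth_drop by metis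
    then show ?thesis by (auto simp: rem_def)
  qed
  have "gcd Y (Gcd (set (rem j y))) = Gcd (set y)" by (simp add: Y_def sety)
  also have "\<dots> = 1" unfolding y_def by (rule Gcd_pow_1[OF G])
  finally have g1: "gcd Y (Gcd (set (rem j y))) = 1" .
  have Yeq: "real_of_int Y = real_of_int (supnorm x) ^ k" using yj xj by (simp add: Y_def power_abs)
  have "real (card (SS A (rem j y) Y 0)) \<le> real_of_int (2*A+1) ^ (length x - 1) / real_of_int (supnorm x) ^ k
       + 3 ^ (length x - 1) * real_of_int (2*A+1) ^ (length x - 1) / real_of_int (2*A+1)"
    using SS_bound[OF A Y0, of "rem j y" 0, unfolded lr g1 Yeq] by simp
  with c1 show ?thesis by (simp add: E_def y_def)
qed


lemma pow_diff_le:
  fixes a b :: real assumes b: "0 \<le> b" and ba: "b \<le> a"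
  shows "a^(Suc n) - b^(Suc n) \<le> real (Suc n) * (a - b) * a^n"
proof (induction n)
  case 0 then show ?case by simp
next
  case (Suc n)
  have a0: "0 \<le> a" using b ba by simp
  have "a^(Suc (Suc n)) - b^(Suc (Suc n)) = a * (a^(Suc n) - b^(Suc n)) + (a - b) * b^(Suc n)"
    by (simp add: algebra_simps)
  also have "\<dots> \<le> a * (real (Suc n) * (a - b) * a^n) + (a - b) * a^(Suc n)"
  proof (rule add_mono)
    show "a * (a^(Suc n) - b^(Suc n)) \<le> a * (real (Suc n) * (a - b) * a^n)"
      using Suc a0 by (rule mult_left_mono)
    show "(a - b) * b^(Suc n) \<le> (a - b) * a^(Suc n)"
      using ba b by (intro mult_left_mono power_mono) auto
  qed
  also have "\<dots> = real (Suc (Suc n)) * (a - b) * a^(Suc n)" by (simp add: algebra_simps)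
  finally show ?case .
qed

definition Box :: "nat \<Rightarrow> int \<Rightarrow> int list set" where
  "Box s m = {x. set x \<subseteq> {-m..m} \<and> length x = s}"

lemma Box_card: "m \<ge> 0 \<Longrightarrow> card (Box s m) = nat (2*m+1) ^ s"
  unfolding Box_def by (simp add: card_lists_length_eq)

lemma Box_finite: "finite (Box s m)"
  unfolding Box_def by (simp add: finite_lists_length_eq)

lemma Box_supnorm: "m \<ge> 0 \<Longrightarrow> Box s m = {x. length x = s \<and> supnorm x \<le> m}"
  unfolding Box_def by (auto simp: supnorm_le_iff abs_le_iff subset_iff)

lemma shell_card:
  fixes m :: int assumes m: "m \<ge> 1" and s: "s \<ge> 1"
  shows "real (card {x. length x = s \<and> supnorm x = m}) \<le> 2 * real s * 3^(s-1) * real_of_int m ^ (s-1)"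
proof -
  have e: "{x. length x = s \<and> supnorm x = m} = Box s m - Box s (m-1)"
    using m by (auto simp: Box_supnorm)
  have sub: "Box s (m-1) \<subseteq> Box s m" using m by (auto simp: Box_supnorm)
  have "card {x. length x = s \<and> supnorm x = m} = card (Box s m) - card (Box s (m-1))"
    unfolding e by (rule card_Diff_subset[OF Box_finite sub])
  then have "real (card {x. length x = s \<and> supnorm x = m}) = real (card (Box s m)) - real (card (Box s (m-1)))"
    using card_mono[OF Box_finite sub] by simp
  also have "\<dots> = (2*real_of_int m+1)^s - (2*real_of_int m-1)^s"
    using m by (simp add: Box_card)
  also have "\<dots> \<le> real s * ((2*real_of_int m+1) - (2*real_of_int m-1)) * (2*real_of_int m+1)^(s-1)"
    using pow_diff_le[of "2*real_of_int m-1" "2*real_of_int m+1" "s-1"] m s by simp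
  also have "\<dots> = 2 * real s * (2*real_of_int m+1)^(s-1)" by simp
  also have "\<dots> \<le> 2 * real s * (3 * real_of_int m)^(s-1)"
    using m by (intro mult_left_mono power_mono) auto
  also have "\<dots> = 2 * real s * 3^(s-1) * real_of_int m ^ (s-1)" by (simp add: power_mult_distrib)
  finally show ?thesis .
qed

lemma shell_sum:
  fixes N :: int and F :: "int \<Rightarrow> real"
  assumes s: "s \<ge> 1" and F: "\<And>m. 1 \<le> m \<Longrightarrow> F m \<ge> 0"
  shows "(\<Sum>x\<in>{x. length x = s \<and> 0 < supnorm x \<and> supnorm x \<le> N}. F (supnorm x))
     \<le> (\<Sum>m\<in>{1..N}. 2 * real s * 3^(s-1) * real_of_int m ^ (s-1) * F m)"
proof -
  let ?P = "{x. length x = s \<and> 0 < supnorm x \<and> supnorm x \<le> N}"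
  have finP: "finite ?P"
  proof (rule finite_subset[OF _ Box_finite[of s N]])
    show "?P \<subseteq> Box s N"
    proof
      fix x assume x: "x \<in> ?P"
      have "\<forall>t\<in>set x. \<bar>t\<bar> \<le> N" using x supnorm_ge by fastforce
      then show "x \<in> Box s N" using x by (auto simp: Box_def abs_le_iff)
    qed
  qed
  have "(\<Sum>x\<in>?P. F (supnorm x)) = (\<Sum>m\<in>{1..N}. \<Sum>x\<in>{x\<in>?P. supnorm x = m}. F (supnorm x))"
    by (rule sum.group[symmetric]) (auto simp: finP)
  also have "\<dots> = (\<Sum>m\<in>{1..N}. real (card {x. length x = s \<and> supnorm x = m}) * F m)"
  proof (rule sum.cong[OF refl])
    fix m assume "m \<in> {1..N}"
    then have "{x\<in>?P. supnorm x = m} = {x. length x = s \<and> supnorm x = m}" by auto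
    then show "(\<Sum>x\<in>{x\<in>?P. supnorm x = m}. F (supnorm x)) = real (card {x. length x = s \<and> supnorm x = m}) * F m"
      by simp
  qed
  also have "\<dots> \<le> (\<Sum>m\<in>{1..N}. 2 * real s * 3^(s-1) * real_of_int m ^ (s-1) * F m)"
    by (intro sum_mono mult_right_mono shell_card F s) auto
  finally show ?thesis .
qed


lemma final_arith:
  fixes A B c N :: real and s k :: nat
  assumes A1: "1 \<le> A" and B1: "1 \<le> B" and B3: "B \<le> 3*A" and c0: "0 < c" and c1: "c \<le> 1"
    and N0: "0 \<le> N" and h1: "N^(s-k) \<le> c^(s-k)*A" and h2: "N^s \<le> c^s*A^2"
    and ks: "k < s" and s2: "2 \<le> s"
  shows "2*real s*3^(s-1)*(B^(s-1)*N^(s-k) + 3^(s-1)*(B^(s-1)/B)*N^s) \<le> 4*real s*27^s*c^(s-k)*A^s"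
proof -
  have A0: "0 < A" using A1 by simp
  have B0: "0 < B" using B1 by simp
  have eA1: "A^(s-1)*A = A^s" using s2 by (metis Suc_diff_1 le_trans one_le_numeral power_Suc2 less_le_trans zero_less_one)
  have eA2: "A^(s-2)*A^2 = A^s" using s2 by (metis le_add_diff_inverse2 power_add)
  have eB: "B^(s-1)/B = B^(s-2)"
  proof -
    have "B^(s-1) = B^(s-2)*B" using s2 by (metis Suc_diff_Suc Suc_1 diff_Suc_1 less_le_trans one_less_numeral_iff power_Suc2 semiring_norm(76))
    then show ?thesis using B0 by simp
  qed
  have pB1: "B^(s-1) \<le> 3^(s-1)*A^(s-1)"
    using B1 B3 by (metis power_mono power_mult_distrib less_imp_le B0 order_trans zero_le_one)
  have pB2: "B^(s-2) \<le> 3^(s-2)*A^(s-2)"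
    using B1 B3 by (metis power_mono power_mult_distrib less_imp_le B0)
  have cc: "c^s \<le> c^(s-k)" using c0 c1 by (intro power_decreasing) auto
  have t1: "B^(s-1)*N^(s-k) \<le> 3^(s-1)*c^(s-k)*A^s"
  proof -
    have "B^(s-1)*N^(s-k) \<le> (3^(s-1)*A^(s-1))*(c^(s-k)*A)"
      using pB1 h1 N0 A0 by (intro mult_mono) auto
    also have "\<dots> = 3^(s-1)*c^(s-k)*(A^(s-1)*A)" by (simp add: ac_simps)
    finally show ?thesis using eA1 by simp
  qed
  have t2: "3^(s-1)*(B^(s-1)/B)*N^s \<le> 3^(s-1)*3^(s-2)*c^(s-k)*A^s"
  proof -
    have "B^(s-2)*N^s \<le> (3^(s-2)*A^(s-2))*(c^s*A^2)"
      using pB2 h2 N0 A0 by (intro mult_mono) auto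
    also have "\<dots> = 3^(s-2)*c^s*(A^(s-2)*A^2)" by (simp add: ac_simps)
    also have "\<dots> \<le> 3^(s-2)*c^(s-k)*A^s" using eA2 cc A0 by (simp add: mult_right_mono)
    finally have "B^(s-2)*N^s \<le> 3^(s-2)*c^(s-k)*A^s" .
    then have "3^(s-1)*(B^(s-2)*N^s) \<le> 3^(s-1)*(3^(s-2)*c^(s-k)*A^s)" by simp
    then show ?thesis using eB by (simp add: ac_simps)
  qed
  have k3: "(3::real)^(s-1) + 3^(s-1)*3^(s-2) \<le> 2*9^s"
  proof -
    have "(3::real)^(s-1) \<le> 3^s" by (intro power_increasing) auto
    moreover have "(3::real)^(s-2) \<le> 3^s" by (intro power_increasing) auto
    ultimately have "(3::real)^(s-1) + 3^(s-1)*3^(s-2) \<le> 3^s + 3^s*3^s"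
      by (intro add_mono mult_mono) auto
    also have "\<dots> \<le> 9^s + 9^s"
    proof -
      have "(3::real)^s \<le> 9^s" by (intro power_mono) auto
      moreover have "(3::real)^s*3^s = 9^s"
        using power_mult_distrib[of "3::real" 3 s, symmetric] by simp
      ultimately show ?thesis by simp
    qed
    finally show ?thesis by simp
  qed
  have "B^(s-1)*N^(s-k) + 3^(s-1)*(B^(s-1)/B)*N^s \<le> (3^(s-1) + 3^(s-1)*3^(s-2))*(c^(s-k)*A^s)"
    using t1 t2 by (simp add: algebra_simps)
  also have "\<dots> \<le> (2*9^s)*(c^(s-k)*A^s)" using k3 c0 A0 by (intro mult_right_mono) auto
  finally have S: "B^(s-1)*N^(s-k) + 3^(s-1)*(B^(s-1)/B)*N^s \<le> 2*9^s*(c^(s-k)*A^s)" by simp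
  have "2*real s*3^(s-1)*(B^(s-1)*N^(s-k) + 3^(s-1)*(B^(s-1)/B)*N^s)
      \<le> 2*real s*3^(s-1)*(2*9^s*(c^(s-k)*A^s))" using S by (intro mult_left_mono) auto
  also have "\<dots> \<le> 2*real s*3^s*(2*9^s*(c^(s-k)*A^s))"
    using c0 A0 by (intro mult_left_mono mult_right_mono power_increasing) auto
  also have "\<dots> = 4*real s*(3^s*9^s)*c^(s-k)*A^s" by (simp add: ac_simps)
  also have "(3::real)^s*9^s = 27^s"
    using power_mult_distrib[of "3::real" 9 s, symmetric] by simp
  finally show ?thesis .
qed


lemma dot_sum: "length a = length y \<Longrightarrow> dot a y = (\<Sum>i<length a. a!i * y!i)"
proof (induction a arbitrary: y)
  case Nil then show ?case by simp
next
  case (Cons h t)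
  then obtain z zs where y: "y = z#zs" by (cases y) auto
  with Cons show ?case by (simp add: sum.lessThan_Suc_shift del: sum.lessThan_Suc)
qed

lemma diag_dot: "length a = length x \<Longrightarrow> diag_form k a x = dot a (map (\<lambda>t. t^k) x)"
  by (simp add: diag_form_def dot_sum)

lemma dot_scale: "dot a (map (\<lambda>t. c * f t) xs) = c * dot a (map f xs)"
proof (induction xs arbitrary: a)
  case Nil then show ?case by simp
next
  case (Cons y ys) then show ?case by (cases a) (auto simp: algebra_simps)
qed

lemma supnorm_zero: "set x \<subseteq> {0} \<Longrightarrow> supnorm x = 0"
  using supnorm_le_iff[of 0 x] supnorm_nonneg[of x] by auto

lemma prim_reduce:
  fixes x :: "int list" and k :: nat
  assumes pos: "0 < supnorm x"
  shows "\<exists>x'. length x' = length x \<and> 0 < supnorm x' \<and> supnorm x' \<le> supnorm x \<and> Gcd (set x') = 1 \<and>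
     (\<forall>a. dot a (map (\<lambda>t. t^k) x) = 0 \<longrightarrow> dot a (map (\<lambda>t. t^k) x') = 0)"
proof -
  define d where "d = Gcd (set x)"
  have "d \<noteq> 0"
  proof
    assume "d = 0"
    then have "set x \<subseteq> {0}" by (simp add: d_def)
    then have "supnorm x = 0" by (rule supnorm_zero)
    with pos show False by simp
  qed
  moreover have "d \<ge> 0" unfolding d_def by (rule Gcd_int_greater_eq_0)
  ultimately have d0: "d > 0" by linarith
  define x' where "x' = map (\<lambda>t. t div d) x"
  have xx: "x = map (\<lambda>t. d * t) x'"
  proof -
    have "\<forall>t\<in>set x. d * (t div d) = t" by (simp add: d_def)
    then show ?thesis by (simp add: x'_def map_idI)
  qed
  have "d = Gcd (set (map (\<lambda>t. d * t) x'))" using xx d_def by simp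
  also have "\<dots> = Gcd ((*) d ` set x')" by simp
  also have "\<dots> = normalize (d * Gcd (set x'))" by (rule Gcd_mult)
  also have "\<dots> = d * Gcd (set x')" using d0 by (simp add: abs_mult)
  finally have g1: "Gcd (set x') = 1" using d0 by simp
  have le: "supnorm x' \<le> supnorm x"
  proof (subst supnorm_le_iff[OF supnorm_nonneg], rule ballI)
    fix t assume t: "t \<in> set x'"
    then have "d * t \<in> set (map (\<lambda>t. d * t) x')" by auto
    then have "d * t \<in> set x" using xx by simp
    then have "\<bar>d * t\<bar> \<le> supnorm x" by (rule supnorm_ge)
    moreover have "\<bar>t\<bar> \<le> \<bar>d * t\<bar>"
    proof -
      have "1 * \<bar>t\<bar> \<le> d * \<bar>t\<bar>" using d0 by (intro mult_right_mono) auto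
      then show ?thesis using d0 by (simp add: abs_mult)
    qed
    ultimately show "\<bar>t\<bar> \<le> supnorm x" by linarith
  qed
  have p': "0 < supnorm x'"
  proof (rule ccontr)
    assume "\<not> 0 < supnorm x'"
    then have "supnorm x' \<le> 0" by simp
    then have "set x' \<subseteq> {0}" using supnorm_le_iff[of 0 x'] by auto
    then have "Gcd (set x') = 0" by simp
    with g1 show False by simp
  qed
  have "\<forall>a. dot a (map (\<lambda>t. t^k) x) = 0 \<longrightarrow> dot a (map (\<lambda>t. t^k) x') = 0"
  proof (intro allI impI)
    fix a assume "dot a (map (\<lambda>t. t^k) x) = 0"
    moreover have "map (\<lambda>t. t^k) x = map (\<lambda>t. d^k * t^k) x'" by (simp add: xx power_mult_distrib)
    ultimately have "d^k * dot a (map (\<lambda>t. t^k) x') = 0" by (simp add: dot_scale)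
    then show "dot a (map (\<lambda>t. t^k) x') = 0" using d0 by simp
  qed
  moreover have "length x' = length x" by (simp add: x'_def)
  ultimately show ?thesis using g1 le p' by blast
qed



theorem theorem1p4:
  fixes k s :: nat and \<eta> :: real
  assumes "k \<ge> 3" and "s \<ge> 2 * k" and "\<eta> > 0"
  shows "\<exists>c::real. c > 0 \<and>
    (\<forall>A::real. A \<ge> 1 \<longrightarrow>
      real (card {a :: int list. length a = s \<and> (\<forall>i\<in>set a. i \<noteq> 0) \<and>
                 real_of_int (supnorm a) \<le> A \<and>
                 (\<exists>x :: int list. length x = s \<and> 0 < supnorm x \<and>
                    real_of_int (supnorm x) \<le> c * (real_of_int (supnorm a)) powr (1 / (real s - real k)) \<and>
                    diag_form k a x = 0)})
      \<le> \<eta> * A ^ s)"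
proof -
  have k3: "k \<ge> 3" and s2k: "s \<ge> 2*k" and eta: "\<eta> > 0" using assms by auto
  have ks: "k < s" and s2: "2 \<le> s" and s1: "1 \<le> s" using k3 s2k by auto
  define K where "K = 4 * real s * 27^s"
  have K0: "K > 0" using s1 by (simp add: K_def)
  define c where "c = min 1 (\<eta> / K)"
  have c0: "c > 0" using eta K0 by (simp add: c_def)
  have c1: "c \<le> 1" by (simp add: c_def)
  have cK: "K * c \<le> \<eta>"
  proof -
    have "c \<le> \<eta> / K" by (simp add: c_def)
    then show ?thesis using K0 by (simp add: field_simps)
  qed
  define dd where "dd = real s - real k"
  have dd0: "dd > 0" using ks by (simp add: dd_def)
  have ddr: "real (s - k) = dd" using ks by (simp add: dd_def of_nat_diff)
  show ?thesis
  proof (rule exI[of _ c], intro conjI allI impI)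
    show "0 < c" by (rule c0)
  next
    fix A :: real assume A1: "1 \<le> A"
    let ?Cnt = "{a :: int list. length a = s \<and> (\<forall>i\<in>set a. i \<noteq> 0) \<and>
                 real_of_int (supnorm a) \<le> A \<and>
                 (\<exists>x :: int list. length x = s \<and> 0 < supnorm x \<and>
                    real_of_int (supnorm x) \<le> c * (real_of_int (supnorm a)) powr (1 / (real s - real k)) \<and>
                    diag_form k a x = 0)}"
    define Ai where "Ai = \<lfloor>A\<rfloor>"
    have Ai1: "Ai \<ge> 1" using A1 by (simp add: Ai_def le_floor_iff)
    have AiA: "real_of_int Ai \<le> A" by (simp add: Ai_def)
    define B where "B = real_of_int (2*Ai+1)"
    have B1: "B \<ge> 1" using Ai1 by (simp add: B_def)
    have B3: "B \<le> 3*A" using AiA A1 by (simp add: B_def)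
    define X where "X = c * A powr (1/dd)"
    define N where "N = \<lfloor>X\<rfloor>"
    define P where "P = {x. length x = s \<and> 0 < supnorm x \<and> supnorm x \<le> N \<and> Gcd (set x) = 1}"
    define P0 where "P0 = {x. length x = s \<and> 0 < supnorm x \<and> supnorm x \<le> N}"
    define Ex where "Ex = (\<lambda>x. {a. length a = length x \<and> set a \<subseteq> {-Ai..Ai} \<and> dot a (map (\<lambda>t. t^k) x) = 0})"
    define F where "F = (\<lambda>m::int. B^(s-1) / real_of_int m ^ k + 3^(s-1) * B^(s-1) / B)"
    have Fnn: "\<And>m. 1 \<le> m \<Longrightarrow> 0 \<le> F m"
    proof -
      fix m :: int assume m: "1 \<le> m"
      have "0 \<le> B^(s-1) / real_of_int m ^ k" using m B1 by simp
      moreover have "0 \<le> 3^(s-1) * B^(s-1) / B" using B1 by simp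
      ultimately show "0 \<le> F m" by (simp add: F_def)
    qed
    have sub: "?Cnt \<subseteq> (\<Union>x\<in>P. Ex x)"
    proof
      fix a assume a: "a \<in> ?Cnt"
      then obtain x where lx: "length x = s" and px: "0 < supnorm x"
        and xb: "real_of_int (supnorm x) \<le> c * (real_of_int (supnorm a)) powr (1 / (real s - real k))"
        and dx: "diag_form k a x = 0" by blast
      have la: "length a = s" and aA: "real_of_int (supnorm a) \<le> A" using a by auto
      obtain x' where lx': "length x' = length x" and px': "0 < supnorm x'" and le': "supnorm x' \<le> supnorm x"
        and g': "Gcd (set x') = 1"
        and imp: "\<forall>a. dot a (map (\<lambda>t. t^k) x) = 0 \<longrightarrow> dot a (map (\<lambda>t. t^k) x') = 0"
        using prim_reduce[OF px, of k] by blast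
      have "dot a (map (\<lambda>t. t^k) x) = 0" using dx diag_dot[of a x k] la lx by simp
      then have d': "dot a (map (\<lambda>t. t^k) x') = 0" using imp by blast
      have "real_of_int (supnorm a) powr (1/dd) \<le> A powr (1/dd)"
        using aA dd0 supnorm_nonneg[of a] by (intro powr_mono2) auto
      then have "c * real_of_int (supnorm a) powr (1/dd) \<le> X"
        unfolding X_def using c0 by (intro mult_left_mono) auto
      then have "real_of_int (supnorm x') \<le> X" using xb le' by (simp add: dd_def)
      then have xN: "supnorm x' \<le> N" by (simp add: N_def le_floor_iff)
      have "set a \<subseteq> {-Ai..Ai}"
      proof
        fix t assume "t \<in> set a"
        then have "\<bar>t\<bar> \<le> supnorm a" by (rule supnorm_ge)
        then have "real_of_int \<bar>t\<bar> \<le> A" using aA by linarith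
        then have "\<bar>t\<bar> \<le> Ai" by (simp add: Ai_def le_floor_iff)
        then show "t \<in> {-Ai..Ai}" by (simp add: abs_le_iff)
      qed
      then have "a \<in> Ex x'" using la lx lx' d' by (simp add: Ex_def)
      moreover have "x' \<in> P" using lx lx' px' xN g' by (simp add: P_def)
      ultimately show "a \<in> (\<Union>x\<in>P. Ex x)" by blast
    qed
    have finP0: "finite P0"
    proof (rule finite_subset[OF _ Box_finite[of s N]])
      show "P0 \<subseteq> Box s N"
      proof
        fix x assume x: "x \<in> P0"
        have "\<forall>t\<in>set x. \<bar>t\<bar> \<le> N" using x supnorm_ge unfolding P0_def by fastforce
        then show "x \<in> Box s N" using x by (auto simp: Box_def abs_le_iff P0_def)
      qed
    qed
    have PP0: "P \<subseteq> P0" by (auto simp: P_def P0_def)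
    have finP: "finite P" using finP0 PP0 by (rule finite_subset[rotated])
    have finE: "\<And>x. finite (Ex x)"
    proof -
      fix x :: "int list"
      show "finite (Ex x)"
        by (rule finite_subset[of _ "{a. set a \<subseteq> {-Ai..Ai} \<and> length a = length x}"])
           (auto simp: Ex_def finite_lists_length_eq)
    qed
    have "card ?Cnt \<le> card (\<Union>x\<in>P. Ex x)"
      by (rule card_mono[OF _ sub]) (simp add: finP finE)
    also have "\<dots> \<le> (\<Sum>x\<in>P. card (Ex x))" by (rule card_UN_le[OF finP])
    finally have "real (card ?Cnt) \<le> (\<Sum>x\<in>P. real (card (Ex x)))"
      by (simp only: of_nat_sum[symmetric] of_nat_le_iff)
    also have "\<dots> \<le> (\<Sum>x\<in>P. F (supnorm x))"
    proof (rule sum_mono)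
      fix x assume x: "x \<in> P"
      then have lx: "length x = s" and g: "Gcd (set x) = 1" by (auto simp: P_def)
      have "real (card (Ex x)) \<le> real_of_int (2*Ai+1) ^ (length x - 1) / real_of_int (supnorm x) ^ k
         + 3 ^ (length x - 1) * real_of_int (2*Ai+1) ^ (length x - 1) / real_of_int (2*Ai+1)"
        unfolding Ex_def using Ai1 g by (intro E_bound) auto
      then show "real (card (Ex x)) \<le> F (supnorm x)" by (simp add: F_def B_def lx)
    qed
    also have "\<dots> \<le> (\<Sum>x\<in>P0. F (supnorm x))"
      by (rule sum_mono2[OF finP0 PP0]) (auto simp: P0_def intro!: Fnn)
    also have "\<dots> \<le> (\<Sum>m\<in>{1..N}. 2 * real s * 3^(s-1) * real_of_int m ^ (s-1) * F m)"
      unfolding P0_def by (rule shell_sum[OF s1 Fnn])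
    finally have main: "real (card ?Cnt) \<le> (\<Sum>m\<in>{1..N}. 2 * real s * 3^(s-1) * real_of_int m ^ (s-1) * F m)" .
    show "real (card ?Cnt) \<le> \<eta> * A ^ s"
    proof (cases "N \<ge> 1")
      case False
      then have "{1..N} = {}" by auto
      then have "real (card ?Cnt) \<le> 0" using main by simp
      also have "0 \<le> \<eta> * A^s" using eta A1 by simp
      finally show ?thesis .
    next
      case True
      define rN where "rN = real_of_int N"
      have rN1: "1 \<le> rN" using True by (simp add: rN_def)
      have rNX: "rN \<le> X" by (simp add: rN_def N_def)
      have A0: "0 < A" using A1 by simp
      have pA1: "(A powr (1/dd)) ^ (s-k) = A"
      proof -
        have "(A powr (1/dd)) ^ (s-k) = A powr (real (s-k) * (1/dd))" using A0 by (simp add: powr_power)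
        also have "\<dots> = A" using ddr dd0 A0 by simp
        finally show ?thesis .
      qed
      have pA2: "(A powr (1/dd)) ^ s \<le> A^2"
      proof -
        have "(A powr (1/dd)) ^ s = A powr (real s * (1/dd))" using A0 by (simp add: powr_power)
        also have "\<dots> \<le> A powr (real 2)"
        proof (rule powr_mono[OF _ A1])
          have "real s \<le> 2 * dd" using s2k by (simp add: dd_def)
          then show "real s * (1/dd) \<le> real 2" using dd0 by (simp add: field_simps)
        qed
        also have "\<dots> = A^2" using A0 by (rule powr_realpow)
        finally show ?thesis .
      qed
      have X0: "0 \<le> A powr (1/dd)" by simp
      have h1: "rN^(s-k) \<le> c^(s-k)*A"
      proof -
        have "rN^(s-k) \<le> X^(s-k)" using rN1 rNX by (intro power_mono) auto
        also have "\<dots> = c^(s-k) * (A powr (1/dd))^(s-k)" by (simp add: X_def power_mult_distrib)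
        finally show ?thesis using pA1 by simp
      qed
      have h2: "rN^s \<le> c^s*A^2"
      proof -
        have "rN^s \<le> X^s" using rN1 rNX by (intro power_mono) auto
        also have "\<dots> = c^s * (A powr (1/dd))^s" by (simp add: X_def power_mult_distrib)
        also have "\<dots> \<le> c^s * A^2" using pA2 c0 by (intro mult_left_mono) auto
        finally show ?thesis .
      qed
      define C where "C = 2 * real s * 3^(s-1)"
      define T where "T = 3^(s-1) * (B^(s-1) / B)"
      have C0: "C \<ge> 0" by (simp add: C_def)
      have T0: "T \<ge> 0" using B1 by (simp add: T_def)
      have termb: "\<And>m. m \<in> {1..N} \<Longrightarrow> 2 * real s * 3^(s-1) * real_of_int m ^ (s-1) * F m
          \<le> C * (B^(s-1) * rN^(s-1-k) + T * rN^(s-1))"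
      proof -
        fix m assume m: "m \<in> {1..N}"
        define rm where "rm = real_of_int m"
        have rm1: "1 \<le> rm" and rmN: "rm \<le> rN" using m by (auto simp: rm_def rN_def)
        have e: "rm^(s-1) / rm^k = rm^(s-1-k)" using rm1 ks by (simp add: power_diff)
        have "real_of_int m ^ (s-1) * F m = B^(s-1) * (rm^(s-1) / rm^k) + T * rm^(s-1)"
          by (simp add: F_def T_def rm_def field_simps)
        also have "\<dots> = B^(s-1) * rm^(s-1-k) + T * rm^(s-1)" by (simp only: e)
        also have "\<dots> \<le> B^(s-1) * rN^(s-1-k) + T * rN^(s-1)"
          using rm1 rmN B1 T0 by (intro add_mono mult_left_mono power_mono) auto
        finally have "real_of_int m ^ (s-1) * F m \<le> B^(s-1) * rN^(s-1-k) + T * rN^(s-1)" .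
        then have "C * (real_of_int m ^ (s-1) * F m) \<le> C * (B^(s-1) * rN^(s-1-k) + T * rN^(s-1))"
          using C0 by (rule mult_left_mono)
        then show "2 * real s * 3^(s-1) * real_of_int m ^ (s-1) * F m
          \<le> C * (B^(s-1) * rN^(s-1-k) + T * rN^(s-1))" by (simp add: C_def ac_simps)
      qed
      have "(\<Sum>m\<in>{1..N}. 2 * real s * 3^(s-1) * real_of_int m ^ (s-1) * F m)
          \<le> real (card {1..N}) * (C * (B^(s-1) * rN^(s-1-k) + T * rN^(s-1)))"
        by (rule sum_bounded_above) (rule termb)
      also have "real (card {1..N}) = rN" using True by (simp add: rN_def)
      also have "rN * (C * (B^(s-1) * rN^(s-1-k) + T * rN^(s-1)))
          = C * (B^(s-1) * (rN * rN^(s-1-k)) + T * (rN * rN^(s-1)))" by (simp add: algebra_simps)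
      also have "rN * rN^(s-1-k) = rN^(s-k)"
      proof -
        have "rN * rN^(s-1-k) = rN^(Suc (s-1-k))" by (simp only: power_Suc)
        moreover have "Suc (s-1-k) = s-k" using ks by simp
        ultimately show ?thesis by (simp only:)
      qed
      also have "rN * rN^(s-1) = rN^s"
      proof -
        have "rN * rN^(s-1) = rN^(Suc (s-1))" by (simp only: power_Suc)
        moreover have "Suc (s-1) = s" using s1 by simp
        ultimately show ?thesis by (simp only:)
      qed
      also have "C * (B^(s-1) * rN^(s-k) + T * rN^s) \<le> K * c^(s-k) * A^s"
        unfolding C_def T_def K_def
        by (rule final_arith[OF A1 B1 B3 c0 c1 _ h1 h2 ks s2]) (use rN1 in simp)
      also have "\<dots> \<le> K * c * A^s"
      proof -
        have "c^(s-k) \<le> c^1" using c0 c1 ks by (intro power_decreasing) auto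
        then show ?thesis using K0 A0 by (intro mult_right_mono mult_left_mono) auto
      qed
      also have "\<dots> \<le> \<eta> * A^s" using cK A0 by (intro mult_right_mono) auto
      finally show ?thesis using main by linarith
    qed
  qed
qed

end
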